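(* Let $N=(G=(V,E),\sigma,u,s)$ be a skew-symmetric network with $m=|E|$, and let $f$ be an IS-flow in $N$. Then $f$ has a symmetric decomposition consisting of at most $m$ elementary flows.
   Context: A skew-symmetric graph is a finite directed graph $G=(V,E)$ (parallel arcs allowed) with a map $\sigma$ of $V\cup E$ onto itself such that $\sigma(x)\ne x$, $\sigma(\sigma(x))=x$ for all $x$, $\sigma(V)=V$, and for each arc $a$ from $v$ to $w$, $\sigma(a)$ is an arc from $\sigma(w)$ to $\sigma(v)$; write $x'=\sigma(x)$. The map $\sigma$ extends to paths: $\sigma(P)$ consists of the mates of the elements of $P$ in reverse order. A function $h$ on $E$ is symmetric if $h(a)=h(\sigma(a))$ for all $a$. A skew-symmetric network is $N=(G,\sigma,u,s)$ with $u:E\to\mathbb Z_{\ge0}$ symmetric and a source $s\in V$; $s'=\sigma(s)$ is the sink. A flow is $f:E\to\mathbb R_{\ge 0}$ with $f(a)\le u(a)$ for all $a$ and $\mathrm{div}_f(x):=\sum_{a\text{ leaving }x}f(a)-\sum_{a\text{ entering }x}f(a)=0$ for all $x\in V\setminus\{s,s'\}$; its value is $|f|=\mathrm{div}_f(s)$. An IS-flow is an integer-valued symmetric flow. For a path or cycle $P$, $\chi^P\in\mathbb R^E$ is the incidence vector of its arc set. An elementary flow is an IS-flow in $N$ of the form $g=\delta\chi^P+\delta\chi^{P'}$, where $P$ is a simple cycle, or a simple path from $s$ to $s'$, or a simple path from $s'$ to $s$, $P'=\sigma(P)$, and $\delta$ is a positive integer. A symmetric decomposition of $f$ is a set $D$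 of elementary flows with $f=\sum_{g\in D}g$. *)

theory Defs
  imports Complex_Main
begin

text \<open>A finite directed multigraph: vertex set V, arc set E, each arc a has tail (tail a) and head (head a).
 The skew-symmetry sigma is given by an involution sv on vertices and se on arcs.\<close>

definition skew_graph ::
  "'v set \<Rightarrow> 'e set \<Rightarrow> ('e \<Rightarrow> 'v) \<Rightarrow> ('e \<Rightarrow> 'v) \<Rightarrow> ('v \<Rightarrow> 'v) \<Rightarrow> ('e \<Rightarrow> 'e) \<Rightarrow> bool" where
  "skew_graph V E tail head sv se \<longleftrightarrow>
     finite V \<and> finite E \<and>
     (\<forall>a\<in>E. tail a \<in> V \<and> head a \<in> V) \<and>
     (\<forall>x\<in>V. sv x \<in> V \<and> sv x \<noteq> x \<and> sv (sv x) = x) \<and>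
     (\<forall>a\<in>E. se a \<in> E \<and> se a \<noteq> a \<and> se (se a) = a \<and>
              tail (se a) = sv (head a) \<and> head (se a) = sv (tail a))"

definition skew_network ::
  "'v set \<Rightarrow> 'e set \<Rightarrow> ('e \<Rightarrow> 'v) \<Rightarrow> ('e \<Rightarrow> 'v) \<Rightarrow> ('v \<Rightarrow> 'v) \<Rightarrow> ('e \<Rightarrow> 'e)
    \<Rightarrow> ('e \<Rightarrow> nat) \<Rightarrow> 'v \<Rightarrow> bool" where
  "skew_network V E tail head sv se u s \<longleftrightarrow>
     skew_graph V E tail head sv se \<and> (\<forall>a\<in>E. u (se a) = u a) \<and> s \<in> V"

definition divg :: "'e set \<Rightarrow> ('e \<Rightarrow> 'v) \<Rightarrow> ('e \<Rightarrow> 'v) \<Rightarrow> ('e \<Rightarrow> real) \<Rightarrow> 'v \<Rightarrow> real" where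
  "divg E tail head f x = (\<Sum>a\<in>{a\<in>E. tail a = x}. f a) - (\<Sum>a\<in>{a\<in>E. head a = x}. f a)"

definition is_flow ::
  "'v set \<Rightarrow> 'e set \<Rightarrow> ('e \<Rightarrow> 'v) \<Rightarrow> ('e \<Rightarrow> 'v) \<Rightarrow> ('v \<Rightarrow> 'v)
    \<Rightarrow> ('e \<Rightarrow> nat) \<Rightarrow> 'v \<Rightarrow> ('e \<Rightarrow> real) \<Rightarrow> bool" where
  "is_flow V E tail head sv u s f \<longleftrightarrow>
     (\<forall>a\<in>E. 0 \<le> f a \<and> f a \<le> real (u a)) \<and>
     (\<forall>x\<in>V - {s, sv s}. divg E tail head f x = 0)"

definition is_IS_flow ::
  "'v set \<Rightarrow> 'e set \<Rightarrow> ('e \<Rightarrow> 'v) \<Rightarrow> ('e \<Rightarrow> 'v) \<Rightarrow> ('v \<Rightarrow> 'v) \<Rightarrow> ('e \<Rightarrow> 'e)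
    \<Rightarrow> ('e \<Rightarrow> nat) \<Rightarrow> 'v \<Rightarrow> ('e \<Rightarrow> real) \<Rightarrow> bool" where
  "is_IS_flow V E tail head sv se u s f \<longleftrightarrow>
     is_flow V E tail head sv u s f \<and> (\<forall>a\<in>E. f a \<in> \<int> \<and> f (se a) = f a)"

definition is_walk :: "'e set \<Rightarrow> ('e \<Rightarrow> 'v) \<Rightarrow> ('e \<Rightarrow> 'v) \<Rightarrow> 'e list \<Rightarrow> bool" where
  "is_walk E tail head p \<longleftrightarrow> p \<noteq> [] \<and> set p \<subseteq> E \<and>
     (\<forall>i. Suc i < length p \<longrightarrow> head (p ! i) = tail (p ! Suc i))"

definition simple_path :: "'e set \<Rightarrow> ('e \<Rightarrow> 'v) \<Rightarrow> ('e \<Rightarrow> 'v) \<Rightarrow> 'v \<Rightarrow> 'v \<Rightarrow> 'e list \<Rightarrow> bool" where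
  "simple_path E tail head x y p \<longleftrightarrow> is_walk E tail head p \<and>
     tail (List.hd p) = x \<and> head (last p) = y \<and> distinct (tail (List.hd p) # map head p)"

definition simple_cycle :: "'e set \<Rightarrow> ('e \<Rightarrow> 'v) \<Rightarrow> ('e \<Rightarrow> 'v) \<Rightarrow> 'e list \<Rightarrow> bool" where
  "simple_cycle E tail head p \<longleftrightarrow> is_walk E tail head p \<and>
     head (last p) = tail (List.hd p) \<and> distinct (map tail p)"

definition sigma_path :: "('e \<Rightarrow> 'e) \<Rightarrow> 'e list \<Rightarrow> 'e list" where
  "sigma_path se p = rev (map se p)"

definition chi :: "'e list \<Rightarrow> 'e \<Rightarrow> real" where
  "chi p a = (if a \<in> set p then 1 else 0)"

definition elementary_flow ::
  "'v set \<Rightarrow> 'e set \<Rightarrow> ('e \<Rightarrow> 'v) \<Rightarrow> ('e \<Rightarrow> 'v) \<Rightarrow> ('v \<Rightarrow> 'v) \<Rightarrow> ('e \<Rightarrow> 'e)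
    \<Rightarrow> ('e \<Rightarrow> nat) \<Rightarrow> 'v \<Rightarrow> ('e \<Rightarrow> real) \<Rightarrow> bool" where
  "elementary_flow V E tail head sv se u s g \<longleftrightarrow>
     is_IS_flow V E tail head sv se u s g \<and>
     (\<exists>P (\<delta>::nat). \<delta> > 0 \<and>
        (simple_cycle E tail head P \<or> simple_path E tail head s (sv s) P \<or> simple_path E tail head (sv s) s P) \<and>
        g = (\<lambda>a. real \<delta> * chi P a + real \<delta> * chi (sigma_path se P) a))"

definition symmetric_decomposition ::
  "'v set \<Rightarrow> 'e set \<Rightarrow> ('e \<Rightarrow> 'v) \<Rightarrow> ('e \<Rightarrow> 'v) \<Rightarrow> ('v \<Rightarrow> 'v) \<Rightarrow> ('e \<Rightarrow> 'e)
    \<Rightarrow> ('e \<Rightarrow> nat) \<Rightarrow> 'v \<Rightarrow> ('e \<Rightarrow> real) \<Rightarrow> ('e \<Rightarrow> real) set \<Rightarrow> bool" where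
  "symmetric_decomposition V E tail head sv se u s f D \<longleftrightarrow>
     finite D \<and> (\<forall>g\<in>D. elementary_flow V E tail head sv se u s g) \<and>
     (\<forall>a\<in>E. f a = (\<Sum>g\<in>D. g a))"

end

theory Submission
  imports Defs
begin

fun wk :: "'e set \<Rightarrow> ('e \<Rightarrow> 'v) \<Rightarrow> ('e \<Rightarrow> 'v) \<Rightarrow> 'v \<Rightarrow> 'e list \<Rightarrow> 'v \<Rightarrow> bool" where
  "wk E T H x [] y = (x = y)"
| "wk E T H x (a # p) y = (a \<in> E \<and> T a = x \<and> wk E T H (H a) p y)"

lemma wk_verts: "wk E T H x p y \<Longrightarrow> x # map H p = map T p @ [y]"
  by (induction p arbitrary: x) auto

lemma wk_append: "wk E T H x (p @ q) z \<longleftrightarrow> (\<exists>y. wk E T H x p y \<and> wk E T H y q z)"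
  by (induction p arbitrary: x) auto

lemma wk_snoc: "wk E T H x (p @ [a]) z \<longleftrightarrow> wk E T H x p (T a) \<and> a \<in> E \<and> H a = z"
  by (auto simp: wk_append)

lemma wk_set: "wk E T H x p y \<Longrightarrow> set p \<subseteq> E"
  by (induction p arbitrary: x) auto

lemma wk_last: "wk E T H x p y \<Longrightarrow> p \<noteq> [] \<Longrightarrow> H (last p) = y"
proof (induction p arbitrary: x)
  case Nil then show ?case by simp
next
  case (Cons a p) then show ?case by (cases p) auto
qed

lemma wk_hd: "wk E T H x p y \<Longrightarrow> p \<noteq> [] \<Longrightarrow> T (hd p) = x"
  by (cases p) auto

lemma wk_nth: "wk E T H x p y \<Longrightarrow> Suc j < length p \<Longrightarrow> H (p!j) = T (p ! Suc j)"
proof (induction p arbitrary: x j)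
  case Nil then show ?case by simp
next
  case (Cons a p)
  show ?case
  proof (cases j)
    case 0 with Cons show ?thesis by (cases p) auto
  next
    case (Suc k) with Cons show ?thesis by auto
  qed
qed

lemma wk_split: "wk E T H x p y \<Longrightarrow> z \<in> set (x # map H p) \<Longrightarrow>
   \<exists>p1 p2. p = p1 @ p2 \<and> wk E T H x p1 z \<and> wk E T H z p2 y"
proof (induction p arbitrary: x)
  case Nil then show ?case by auto
next
  case (Cons a p)
  show ?case
  proof (cases "z = x")
    case True
    then show ?thesis using Cons.prems by (intro exI[of _ "[]"] exI[of _ "a # p"]) auto
  next
    case False
    then have "z \<in> set (H a # map H p)" using Cons.prems by auto
    from Cons.IH[OF _ this] Cons.prems obtain p1 p2 where "p = p1 @ p2" "wk E T H (H a) p1 z" "wk E T H z p2 y"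
      by auto
    then show ?thesis using Cons.prems by (intro exI[of _ "a # p1"] exI[of _ p2]) auto
  qed
qed

lemma is_walk_Cons: "is_walk E T H (a # p) \<longleftrightarrow> a \<in> E \<and> (p = [] \<or> (H a = T (hd p) \<and> is_walk E T H p))"
proof (cases p)
  case Nil then show ?thesis by (auto simp: is_walk_def)
next
  case (Cons b q)
  have "(\<forall>i. Suc i < length (a # b # q) \<longrightarrow> H ((a # b # q) ! i) = T ((a # b # q) ! Suc i))
     \<longleftrightarrow> H a = T b \<and> (\<forall>i. Suc i < length (b # q) \<longrightarrow> H ((b # q) ! i) = T ((b # q) ! Suc i))"
    (is "?L \<longleftrightarrow> ?R")
  proof
    assume ?L
    then show ?R by (metis Suc_less_eq length_Cons nth_Cons_0 nth_Cons_Suc zero_less_Suc)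
  next
    assume ?R
    show ?L
    proof (intro allI impI)
      fix i assume "Suc i < length (a # b # q)"
      then show "H ((a # b # q) ! i) = T ((a # b # q) ! Suc i)" using \<open>?R\<close>
        by (cases i) auto
    qed
  qed
  then show ?thesis using Cons by (auto simp: is_walk_def)
qed

lemma wk_is_walk: "wk E T H x p y \<Longrightarrow> p \<noteq> [] \<Longrightarrow> is_walk E T H p"
proof (induction p arbitrary: x)
  case Nil then show ?case by simp
next
  case (Cons a p) then show ?case
    by (cases p) (auto simp: is_walk_Cons)
qed

lemma is_walk_wk: "is_walk E T H p \<Longrightarrow> wk E T H (T (hd p)) p (H (last p))"
proof (induction p)
  case Nil then show ?case by (simp add: is_walk_def)
next
  case (Cons a p) then show ?case
    by (cases p) (auto simp: is_walk_Cons)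
qed

lemma sum_chi_T:
  assumes "set P \<subseteq> E" "finite E" "distinct (map T P)"
  shows "(\<Sum>a\<in>{a\<in>E. T a = x}. chi P a) = (if x \<in> set (map T P) then 1 else 0)"
proof -
  have fin: "finite {a\<in>E. T a = x}" using assms(2) by simp
  have "(\<Sum>a\<in>{a\<in>E. T a = x}. chi P a) = (\<Sum>a\<in>{a\<in>E. T a = x} \<inter> set P. 1)"
    unfolding chi_def using sum.inter_restrict[OF fin, of "\<lambda>_. 1::real" "set P"] by simp
  also have "{a\<in>E. T a = x} \<inter> set P = {a\<in>set P. T a = x}" using assms(1) by auto
  finally have eq: "(\<Sum>a\<in>{a\<in>E. T a = x}. chi P a) = real (card {a\<in>set P. T a = x})" by simp
  have inj: "inj_on T (set P)" using assms(3) by (simp add: distinct_map)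
  show ?thesis
  proof (cases "x \<in> set (map T P)")
    case True
    then obtain b where b: "b \<in> set P" "T b = x" by auto
    then have "{a\<in>set P. T a = x} = {b}" using inj by (auto simp: inj_on_def)
    then show ?thesis using eq True by simp
  next
    case False
    then have "{a\<in>set P. T a = x} = {}" by auto
    then show ?thesis using eq False by simp
  qed
qed

lemma div_chi_zero:
  assumes "set P \<subseteq> E" "finite E" "distinct (map T P)" "distinct (map H P)"
    "x \<in> set (map T P) \<longleftrightarrow> x \<in> set (map H P)"
  shows "divg E T H (chi P) x = 0"
  unfolding divg_def using sum_chi_T[OF assms(1,2,3)] sum_chi_T[OF assms(1,2,4)] assms(5) by simp

lemma divg_cong: "(\<And>a. a \<in> E \<Longrightarrow> h1 a = h2 a) \<Longrightarrow> divg E T H h1 x = divg E T H h2 x"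
  unfolding divg_def by (intro arg_cong2[where f="(-)"] sum.cong) auto

lemma divg_lin: "divg E T H (\<lambda>a. c * h1 a + c * h2 a) x = c * divg E T H h1 x + c * divg E T H h2 x"
  unfolding divg_def by (simp add: sum.distrib sum_distrib_left algebra_simps)

lemma divg_diff: "divg E T H (\<lambda>a. h1 a - h2 a) x = divg E T H h1 x - divg E T H h2 x"
  unfolding divg_def by (simp add: sum_subtractf algebra_simps)

lemma simple_cycle_facts:
  assumes "simple_cycle E T H P"
  shows "set P \<subseteq> E" "distinct (map T P)" "distinct (map H P)"
    "x \<in> set (map T P) \<longleftrightarrow> x \<in> set (map H P)"
proof -
  have w: "is_walk E T H P" and P: "P \<noteq> []" and c: "H (last P) = T (hd P)" and d: "distinct (map T P)"
    using assms by (auto simp: simple_cycle_def is_walk_def)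
  have wk: "wk E T H (T (hd P)) P (T (hd P))" using is_walk_wk[OF w] c by simp
  show "set P \<subseteq> E" using wk_set[OF wk] .
  show "distinct (map T P)" by fact
  obtain b rest where Pb: "P = b # rest" using P by (cases P) auto
  have v: "T (hd P) # map H P = map T P @ [T (hd P)]" using wk_verts[OF wk] .
  then have "map H P = map T rest @ [T b]" using Pb by simp
  then show "distinct (map H P)" "x \<in> set (map T P) \<longleftrightarrow> x \<in> set (map H P)"
    using d Pb by auto
qed

lemma simple_path_facts:
  assumes "simple_path E T H y z P"
  shows "set P \<subseteq> E" "distinct (map T P)" "distinct (map H P)"
    "x \<notin> {y, z} \<Longrightarrow> x \<in> set (map T P) \<longleftrightarrow> x \<in> set (map H P)"
proof -
  have w: "is_walk E T H P" and P: "P \<noteq> []" and c: "H (last P) = z" "T (hd P) = y"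
    and d: "distinct (y # map H P)"
    using assms by (auto simp: simple_path_def is_walk_def)
  have wk: "wk E T H y P z" using is_walk_wk[OF w] c by simp
  show "set P \<subseteq> E" using wk_set[OF wk] .
  have v: "y # map H P = map T P @ [z]" using wk_verts[OF wk] .
  show "distinct (map T P)" using d v by (metis distinct_append)
  show "distinct (map H P)" using d by simp
  assume "x \<notin> {y, z}"
  then show "x \<in> set (map T P) \<longleftrightarrow> x \<in> set (map H P)"
    using arg_cong[OF v, of set] by auto
qed

locale skn =
  fixes V :: "'v set" and E :: "'e set" and tail head :: "'e \<Rightarrow> 'v"
    and sv :: "'v \<Rightarrow> 'v" and se :: "'e \<Rightarrow> 'e" and u :: "'e \<Rightarrow> nat" and s :: 'v
  assumes net: "skew_network V E tail head sv se u s"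
begin

lemma finV: "finite V" and finE: "finite E" and tailV: "a \<in> E \<Longrightarrow> tail a \<in> V"
  and headV: "a \<in> E \<Longrightarrow> head a \<in> V" and svV: "x \<in> V \<Longrightarrow> sv x \<in> V"
  and sv_neq: "x \<in> V \<Longrightarrow> sv x \<noteq> x" and sv_inv: "x \<in> V \<Longrightarrow> sv (sv x) = x"
  and seE: "a \<in> E \<Longrightarrow> se a \<in> E" and se_neq: "a \<in> E \<Longrightarrow> se a \<noteq> a"
  and se_inv: "a \<in> E \<Longrightarrow> se (se a) = a"
  and tail_se: "a \<in> E \<Longrightarrow> tail (se a) = sv (head a)"
  and head_se: "a \<in> E \<Longrightarrow> head (se a) = sv (tail a)"
  and u_se: "a \<in> E \<Longrightarrow> u (se a) = u a"
  and sV: "s \<in> V"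
  using net unfolding skew_network_def skew_graph_def by auto

lemma sum_se_tail:
  assumes "x \<in> V"
  shows "(\<Sum>a\<in>{a\<in>E. tail a = x}. h (se a)) = (\<Sum>b\<in>{b\<in>E. head b = sv x}. h b)"
proof (rule sum.reindex_bij_betw)
  show "bij_betw se {a \<in> E. tail a = x} {b \<in> E. head b = sv x}"
  proof (rule bij_betw_byWitness[where f'=se])
    show "\<forall>a\<in>{a \<in> E. tail a = x}. se (se a) = a" using se_inv by auto
    show "\<forall>a\<in>{b \<in> E. head b = sv x}. se (se a) = a" using se_inv by auto
    show "se ` {a \<in> E. tail a = x} \<subseteq> {b \<in> E. head b = sv x}" using seE head_se by auto
    show "se ` {b \<in> E. head b = sv x} \<subseteq> {a \<in> E. tail a = x}"
      using seE tail_se sv_inv assms by auto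
  qed
qed

lemma sum_se_head:
  assumes "x \<in> V"
  shows "(\<Sum>a\<in>{a\<in>E. head a = x}. h (se a)) = (\<Sum>b\<in>{b\<in>E. tail b = sv x}. h b)"
proof (rule sum.reindex_bij_betw)
  show "bij_betw se {a \<in> E. head a = x} {b \<in> E. tail b = sv x}"
  proof (rule bij_betw_byWitness[where f'=se])
    show "\<forall>a\<in>{a \<in> E. head a = x}. se (se a) = a" using se_inv by auto
    show "\<forall>a\<in>{b \<in> E. tail b = sv x}. se (se a) = a" using se_inv by auto
    show "se ` {a \<in> E. head a = x} \<subseteq> {b \<in> E. tail b = sv x}" using seE tail_se by auto
    show "se ` {b \<in> E. tail b = sv x} \<subseteq> {a \<in> E. head a = x}"
      using seE head_se sv_inv assms by auto
  qed
qed

lemma divg_se: assumes x: "x \<in> V" shows "divg E tail head (\<lambda>a. h (se a)) x = - divg E tail head h (sv x)"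
  unfolding divg_def by (simp only: sum_se_tail[OF x] sum_se_head[OF x])

lemma chi_sigma: "set P \<subseteq> E \<Longrightarrow> b \<in> E \<Longrightarrow> chi (sigma_path se P) b = chi P (se b)"
proof -
  assume PE: "set P \<subseteq> E" and b: "b \<in> E"
  have "b \<in> set (sigma_path se P) \<longleftrightarrow> se b \<in> set P"
  proof
    assume "b \<in> set (sigma_path se P)"
    then obtain c where "c \<in> set P" "b = se c" unfolding sigma_path_def by auto
    then show "se b \<in> set P" using se_inv PE by auto
  next
    assume "se b \<in> set P"
    then have "se (se b) \<in> set (sigma_path se P)" unfolding sigma_path_def by auto
    then show "b \<in> set (sigma_path se P)" using se_inv[OF b] by simp
  qed
  then show ?thesis unfolding chi_def by simp
qed

definition form :: "nat \<Rightarrow> 'e list \<Rightarrow> 'e \<Rightarrow> real" where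
  "form \<delta> P = (\<lambda>a. real \<delta> * chi P a + real \<delta> * chi (sigma_path se P) a)"

definition spc :: "'e list \<Rightarrow> bool" where
  "spc P \<longleftrightarrow> simple_cycle E tail head P \<or> simple_path E tail head s (sv s) P \<or> simple_path E tail head (sv s) s P"

lemma spc_facts:
  assumes "spc P"
  shows "set P \<subseteq> E" "distinct (map tail P)" "distinct (map head P)"
    "x \<notin> {s, sv s} \<Longrightarrow> x \<in> set (map tail P) \<longleftrightarrow> x \<in> set (map head P)"
proof -
  have "(set P \<subseteq> E \<and> distinct (map tail P) \<and> distinct (map head P)) \<and>
    (x \<notin> {s, sv s} \<longrightarrow> (x \<in> set (map tail P) \<longleftrightarrow> x \<in> set (map head P)))"
  proof -
    consider "simple_cycle E tail head P" | "simple_path E tail head s (sv s) P" | "simple_path E tail head (sv s) s P"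
      using assms unfolding spc_def by blast
    then show ?thesis
    proof cases
      case 1 then show ?thesis using simple_cycle_facts[OF 1] by simp
    next
      case 2 then show ?thesis using simple_path_facts[OF 2] by simp
    next
      case 3
      have "x \<notin> {s, sv s} \<Longrightarrow> x \<notin> {sv s, s}" by auto
      then show ?thesis using simple_path_facts[OF 3] by simp
    qed
  qed
  then show "set P \<subseteq> E" "distinct (map tail P)" "distinct (map head P)"
    "x \<notin> {s, sv s} \<Longrightarrow> x \<in> set (map tail P) \<longleftrightarrow> x \<in> set (map head P)" by simp_all
qed

lemma elem_intro:
  assumes "spc P" "0 < \<delta>" "\<And>a. a \<in> E \<Longrightarrow> form \<delta> P a \<le> real (u a)"
  shows "elementary_flow V E tail head sv se u s (form \<delta> P)"
proof -
  have PE: "set P \<subseteq> E" using spc_facts[OF assms(1)] by simp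
  have fa: "a \<in> E \<Longrightarrow> form \<delta> P a = real \<delta> * chi P a + real \<delta> * chi P (se a)" for a
    unfolding form_def using chi_sigma[OF PE] by simp
  have nn: "0 \<le> form \<delta> P a" if "a \<in> E" for a using fa[OF that] by (simp add: chi_def)
  have int: "form \<delta> P a \<in> \<int>" if "a \<in> E" for a using fa[OF that] by (simp add: chi_def)
  have sym: "form \<delta> P (se a) = form \<delta> P a" if "a \<in> E" for a
    using fa[OF that] fa[OF seE[OF that]] se_inv[OF that] by simp
  have cons: "divg E tail head (form \<delta> P) x = 0" if x: "x \<in> V - {s, sv s}" for x
  proof -
    have xV: "x \<in> V" using x by simp
    have svx: "sv x \<notin> {s, sv s}" using x sv_inv sV by (auto, metis)
    have d1: "divg E tail head (chi P) x = 0"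
      using div_chi_zero[OF PE finE spc_facts(2,3)[OF assms(1)] spc_facts(4)[OF assms(1)]] x by simp
    have d2: "divg E tail head (chi P) (sv x) = 0"
      using div_chi_zero[OF PE finE spc_facts(2,3)[OF assms(1)] spc_facts(4)[OF assms(1) svx]] by simp
    have "divg E tail head (form \<delta> P) x = divg E tail head (\<lambda>a. real \<delta> * chi P a + real \<delta> * chi P (se a)) x"
      by (rule divg_cong) (simp add: fa)
    also have "\<dots> = real \<delta> * divg E tail head (chi P) x + real \<delta> * divg E tail head (\<lambda>a. chi P (se a)) x"
      by (rule divg_lin)
    also have "\<dots> = 0" using d1 d2 divg_se[OF xV] by simp
    finally show ?thesis .
  qed
  show ?thesis
    unfolding elementary_flow_def is_IS_flow_def is_flow_def
  proof (intro conjI ballI)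
    show "\<exists>Pa \<delta>'. 0 < \<delta>' \<and>
      (simple_cycle E tail head Pa \<or> simple_path E tail head s (sv s) Pa \<or> simple_path E tail head (sv s) s Pa) \<and>
      form \<delta> P = (\<lambda>a. real \<delta>' * chi Pa a + real \<delta>' * chi (sigma_path se Pa) a)"
      using assms(1,2) unfolding spc_def form_def by blast
  qed (use nn int sym cons assms(3) in auto)
qed


definition good :: "('e \<Rightarrow> nat) \<Rightarrow> 'e list \<Rightarrow> bool" where
  "good F p \<longleftrightarrow> (\<forall>b\<in>set p. se b \<in> set p \<longrightarrow> 2 \<le> F b)"

definition outN :: "('e \<Rightarrow> nat) \<Rightarrow> 'v \<Rightarrow> nat" where
  "outN F x = (\<Sum>a\<in>{a\<in>E. tail a = x}. F a)"

definition inN :: "('e \<Rightarrow> nat) \<Rightarrow> 'v \<Rightarrow> nat" where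
  "inN F x = (\<Sum>a\<in>{a\<in>E. head a = x}. F a)"

lemma outN_sym:
  assumes Fsym: "\<forall>a\<in>E. F (se a) = F a" and x: "x \<in> V"
  shows "outN F x = inN F (sv x)"
proof -
  have "outN F x = (\<Sum>a\<in>{a\<in>E. tail a = x}. F (se a))"
    unfolding outN_def using Fsym by (intro sum.cong) auto
  also have "\<dots> = inN F (sv x)" unfolding inN_def by (rule sum_se_tail[OF x])
  finally show ?thesis .
qed

lemma good_mono: "set q \<subseteq> set p \<Longrightarrow> good F p \<Longrightarrow> good F q"
  unfolding good_def by auto

lemma good_snoc:
  assumes Fsym: "\<forall>a\<in>E. F (se a) = F a" and g: "good F p" and a: "a \<in> E" and pE: "set p \<subseteq> E"
    and c: "2 \<le> F a \<or> se a \<notin> set p"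
  shows "good F (p @ [a])"
  unfolding good_def
proof (intro ballI impI)
  fix b assume b: "b \<in> set (p @ [a])" and sb: "se b \<in> set (p @ [a])"
  show "2 \<le> F b"
  proof (cases "b = a")
    case True
    then have "se a \<in> set p" using sb se_neq[OF a] by auto
    then show ?thesis using c True by auto
  next
    case False
    then have bp: "b \<in> set p" using b by auto
    show ?thesis
    proof (cases "se b = a")
      case True
      have bE: "b \<in> E" using bp pE by auto
      then have "se a = b" using True se_inv by auto
      then have "2 \<le> F a" using c bp by auto
      moreover have "F b = F a" using Fsym bE True by metis
      ultimately show ?thesis by simp
    next
      case False
      then show ?thesis using g bp sb unfolding good_def by auto
    qed
  qed
qed

lemma stuck:
  assumes Fsym: "\<forall>a\<in>E. F (se a) = F a"
    and Fcons: "\<forall>x\<in>V - {s, sv s}. outN F x = inN F x"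
    and wk: "wk E tail head w p v" and pne: "p \<noteq> []" and dist: "distinct (w # map head p)"
    and pos: "\<forall>a\<in>set p. 0 < F a" and g: "good F p" and vs: "v \<notin> {s, sv s}"
  shows "\<exists>a\<in>E. tail a = v \<and> 0 < F a \<and> (2 \<le> F a \<or> se a \<notin> set p)"
proof (rule ccontr)
  assume "\<not> ?thesis"
  then have H: "F a = 1 \<and> se a \<in> set p" if "a \<in> E" "tail a = v" "0 < F a" for a
    using that by fastforce
  define ai where "ai = last p"
  have pE: "set p \<subseteq> E" using wk_set[OF wk] .
  have ai: "ai \<in> set p" "ai \<in> E" "head ai = v" "0 < F ai"
    using pne pE wk_last[OF wk pne] pos unfolding ai_def by auto
  have vV: "v \<in> V" using headV ai by auto
  have inj: "inj_on head (set p)" using dist by (simp add: distinct_map)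
  have finO: "finite {a\<in>E. tail a = y}" for y using finE by simp
  have finI: "finite {a\<in>E. head a = y}" for y using finE by simp
  have in_ge: "F ai \<le> inN F v" unfolding inN_def
    by (rule member_le_sum) (use ai finI in auto)
  have out_eq: "outN F v = inN F v" using Fcons vV vs by auto
  then have "outN F v \<noteq> 0" using in_ge ai by auto
  then obtain a0 where a0: "a0 \<in> E" "tail a0 = v" "0 < F a0"
    unfolding outN_def using finO by (auto simp: sum_eq_0_iff)
  have uniq: "a = a0" if "a \<in> E" "tail a = v" "0 < F a" for a
  proof -
    have "se a \<in> set p" "se a0 \<in> set p" using H that a0 by auto
    moreover have "head (se a) = head (se a0)" using head_se that a0 by auto
    ultimately have "se a = se a0" using inj by (auto simp: inj_on_def)
    then show ?thesis using se_inv that a0 by metis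
  qed
  have "outN F v = F a0 + (\<Sum>a\<in>{a\<in>E. tail a = v} - {a0}. F a)"
    unfolding outN_def using a0 finO by (simp add: sum.remove)
  also have "(\<Sum>a\<in>{a\<in>E. tail a = v} - {a0}. F a) = 0"
    using uniq finO by (auto simp: sum_eq_0_iff)
  finally have "outN F v = 1" using H a0 by auto
  then have inv1: "inN F v = 1" using out_eq by simp
  then have Fai: "F ai = 1" using in_ge ai by auto
  have aj: "se a0 \<in> set p" "head (se a0) = sv v" using H a0 head_se by auto
  then obtain j where j: "j < length p" "p ! j = se a0" by (auto simp: in_set_conv_nth)
  have "j \<noteq> length p - 1"
  proof
    assume "j = length p - 1"
    then have "p ! j = ai" unfolding ai_def using pne by (simp add: last_conv_nth)
    then show False using aj j ai sv_neq[OF vV] by auto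
  qed
  then have sj: "Suc j < length p" using j by auto
  define b where "b = p ! Suc j"
  have b: "b \<in> set p" "b \<in> E" "tail b = sv v" "0 < F b"
    using wk_nth[OF wk sj] j aj pE pos nth_mem[OF sj] unfolding b_def by auto
  have out2: "outN F (sv v) = 1" using outN_sym[OF Fsym svV[OF vV]] sv_inv[OF vV] inv1 by simp
  define c where "c = se ai"
  have c: "c \<in> E" "tail c = sv v" "F c = 1" using seE tail_se ai Fsym Fai unfolding c_def by auto
  have "b = c"
  proof (rule ccontr)
    assume bc: "b \<noteq> c"
    have "(\<Sum>a\<in>{b, c}. F a) \<le> outN F (sv v)" unfolding outN_def
      by (rule sum_mono2) (use finO b c in auto)
    then show False using bc b c out2 by simp
  qed
  then have "se ai \<in> set p" using b c_def by simp
  then have "2 \<le> F ai" using g ai unfolding good_def by auto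
  then show False using Fai by simp
qed

lemma walk_main:
  assumes Fsym: "\<forall>a\<in>E. F (se a) = F a"
    and Fcons: "\<forall>x\<in>V - {s, sv s}. outN F x = inN F x"
  shows "card V - length p = n \<Longrightarrow> wk E tail head w p v \<Longrightarrow> w \<in> V \<Longrightarrow> distinct (w # map head p)
    \<Longrightarrow> \<forall>a\<in>set p. 0 < F a \<Longrightarrow> good F p \<Longrightarrow> p \<noteq> [] \<or> (\<exists>a\<in>E. tail a = w \<and> 0 < F a)
    \<Longrightarrow> w \<in> {s, sv s} \<or> (\<forall>a\<in>E. 0 < F a \<longrightarrow> head a \<notin> {s, sv s})
    \<Longrightarrow> \<exists>P. spc P \<and> (\<forall>a\<in>set P. 0 < F a) \<and> good F P"
proof (induction n arbitrary: p v rule: less_induct)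
  case (less n p v)
  note wk = less.prems(2) and wV = less.prems(3) and dist = less.prems(4) and pos = less.prems(5)
    and g = less.prems(6) and ne = less.prems(7) and st = less.prems(8)
  have pE: "set p \<subseteq> E" using wk_set[OF wk] .
  show ?case
  proof (cases "p \<noteq> [] \<and> v \<in> {s, sv s}")
    case True
    then have pne: "p \<noteq> []" and vs: "v \<in> {s, sv s}" by auto
    have l: "last p \<in> set p" "head (last p) = v" using pne wk_last[OF wk pne] by auto
    then have "w \<in> {s, sv s}" using st pos pE vs by auto
    moreover have "v \<noteq> w" using dist l by (metis distinct.simps(2) image_eqI list.set_map)
    ultimately have cases: "(w = s \<and> v = sv s) \<or> (w = sv s \<and> v = s)" using vs sv_inv[OF sV] by auto
    have sp: "simple_path E tail head w v p"
      unfolding simple_path_def using wk_is_walk[OF wk pne] wk_hd[OF wk pne] l dist by simp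
    have "spc p" using cases sp unfolding spc_def by auto
    then show ?thesis using pos g by blast
  next
    case False
    obtain a where a: "a \<in> E" "tail a = v" "0 < F a" "2 \<le> F a \<or> se a \<notin> set p"
    proof (cases "p = []")
      case True
      then have "v = w" using wk by simp
      then show ?thesis using that ne True by auto
    next
      case pn: False
      then have "v \<notin> {s, sv s}" using False by auto
      then show ?thesis using stuck[OF Fsym Fcons wk pn dist pos g] that by blast
    qed
    have g2: "good F (p @ [a])" using good_snoc[OF Fsym g a(1) pE a(4)] .
    have wk2: "wk E tail head w (p @ [a]) (head a)" using wk a by (simp add: wk_snoc)
    show ?thesis
    proof (cases "head a \<in> set (w # map head p)")
      case True
      from wk_split[OF wk True] obtain p1 p2 where sp: "p = p1 @ p2"
        "wk E tail head w p1 (head a)" "wk E tail head (head a) p2 v" by auto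
      define C where "C = p2 @ [a]"
      have wkC: "wk E tail head (head a) C (head a)" unfolding C_def using sp(3) a by (simp add: wk_snoc)
      have Cne: "C \<noteq> []" unfolding C_def by simp
      have v1: "w # map head p1 = map tail p1 @ [head a]" using wk_verts[OF sp(2)] .
      have v2: "head a # map head p2 = map tail p2 @ [v]" using wk_verts[OF sp(3)] .
      have "w # map head p = map tail p1 @ (head a # map head p2)" using v1 sp(1) by simp
      then have "distinct (head a # map head p2)" using dist by (metis distinct_append)
      then have dC: "distinct (map tail C)" unfolding C_def using v2 a by simp
      have scC: "simple_cycle E tail head C"
        unfolding simple_cycle_def using wk_is_walk[OF wkC Cne] wk_hd[OF wkC Cne] wk_last[OF wkC Cne] dC
        by simp
      have subC: "set C \<subseteq> set (p @ [a])" unfolding C_def sp(1) by auto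
      have "good F C" using good_mono[OF subC g2] .
      moreover have "\<forall>b\<in>set C. 0 < F b" using subC pos a by auto
      ultimately show ?thesis using scC unfolding spc_def by blast
    next
      case False
      have setV: "set (w # map head p) \<subseteq> V" using wV pE headV by auto
      have "length (w # map head p) \<le> card V"
        using card_mono[OF finV setV] distinct_card[OF dist] by simp
      then have lt: "card V - length (p @ [a]) < n" using less.prems(1) by simp
      show ?thesis
      proof (rule less.IH[OF lt refl wk2 wV])
        show "distinct (w # map head (p @ [a]))" using dist False by auto
        show "\<forall>b\<in>set (p @ [a]). 0 < F b" using pos a by auto
        show "good F (p @ [a])" by fact
        show "p @ [a] \<noteq> [] \<or> (\<exists>a\<in>E. tail a = w \<and> 0 < F a)" by simp
        show "w \<in> {s, sv s} \<or> (\<forall>a\<in>E. 0 < F a \<longrightarrow> head a \<notin> {s, sv s})" by fact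
      qed
    qed
  qed
qed

lemma exists_P:
  assumes Fsym: "\<forall>a\<in>E. F (se a) = F a"
    and Fcons: "\<forall>x\<in>V - {s, sv s}. outN F x = inN F x"
    and nz: "\<exists>a\<in>E. 0 < F a"
  shows "\<exists>P. spc P \<and> (\<forall>a\<in>set P. 0 < F a) \<and> good F P"
proof (cases "\<exists>a\<in>E. 0 < F a \<and> tail a \<in> {s, sv s}")
  case True
  then obtain a where a: "a \<in> E" "0 < F a" "tail a \<in> {s, sv s}" by blast
  show ?thesis
    by (rule walk_main[OF Fsym Fcons refl, where p="[]" and w="tail a" and v="tail a"]) (use a tailV in \<open>auto simp: good_def\<close>)
next
  case False
  obtain a where a: "a \<in> E" "0 < F a" using nz by blast
  have st: "\<forall>b\<in>E. 0 < F b \<longrightarrow> head b \<notin> {s, sv s}"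
  proof (intro ballI impI)
    fix b assume b: "b \<in> E" "0 < F b"
    then have "se b \<in> E" "0 < F (se b)" "tail (se b) = sv (head b)" using seE Fsym tail_se by auto
    then have "\<not> (0 < F (se b) \<and> tail (se b) \<in> {s, sv s})" using False by blast
    then have "sv (head b) \<notin> {s, sv s}" using \<open>0 < F (se b)\<close> \<open>tail (se b) = sv (head b)\<close> by simp
    then show "head b \<notin> {s, sv s}" using sv_inv[OF sV] by auto
  qed
  show ?thesis
    by (rule walk_main[OF Fsym Fcons refl, where p="[]" and w="tail a" and v="tail a"]) (use a tailV st in \<open>auto simp: good_def\<close>)
qed


lemma elem_nonneg: "elementary_flow V E tail head sv se u s g \<Longrightarrow> a \<in> E \<Longrightarrow> 0 \<le> g a"
  unfolding elementary_flow_def is_IS_flow_def is_flow_def by auto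

lemma elem_div: "elementary_flow V E tail head sv se u s g \<Longrightarrow> x \<in> V - {s, sv s} \<Longrightarrow> divg E tail head g x = 0"
  unfolding elementary_flow_def is_IS_flow_def is_flow_def by auto

lemma elem_double:
  assumes el: "elementary_flow V E tail head sv se u s g" and b: "\<And>a. a \<in> E \<Longrightarrow> 2 * g a \<le> real (u a)"
  shows "elementary_flow V E tail head sv se u s (\<lambda>a. 2 * g a)"
proof -
  obtain P \<delta> where P: "0 < \<delta>" "spc P" "g = form \<delta> P"
    using el unfolding elementary_flow_def spc_def form_def by blast
  have eq: "(\<lambda>a. 2 * g a) = form (2 * \<delta>) P" unfolding P(3) form_def by (auto simp: algebra_simps)
  show ?thesis unfolding eq
  proof (rule elem_intro[OF P(2) _])
    show "0 < 2 * \<delta>" using P(1) by simp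
    fix a assume a: "a \<in> E"
    have "form (2 * \<delta>) P a = 2 * g a" using fun_cong[OF eq, of a] by simp
    then show "form (2 * \<delta>) P a \<le> real (u a)" using b[OF a] by simp
  qed
qed

lemma decomp_insert:
  "finite D' \<Longrightarrow> \<forall>h\<in>D'. elementary_flow V E tail head sv se u s h \<Longrightarrow> elementary_flow V E tail head sv se u s g
   \<Longrightarrow> (\<forall>a\<in>E. g a + (\<Sum>h\<in>D'. h a) \<le> real (u a))
   \<Longrightarrow> \<exists>D. finite D \<and> (\<forall>h\<in>D. elementary_flow V E tail head sv se u s h) \<and> card D \<le> card D' + 1
        \<and> (\<forall>a\<in>E. (\<Sum>h\<in>D. h a) = g a + (\<Sum>h\<in>D'. h a))"
proof (induction "card D'" arbitrary: D' g rule: less_induct)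
  case (less D' g)
  show ?case
  proof (cases "g \<in> D'")
    case False
    then show ?thesis using less.prems
      by (intro exI[of _ "insert g D'"]) (auto simp: card_insert_if)
  next
    case True
    define D'' where "D'' = D' - {g}"
    have fin: "finite D''" using less.prems(1) unfolding D''_def by simp
    have cd: "card D'' < card D'" unfolding D''_def by (rule card_Diff1_less[OF less.prems(1) True])
    have sumeq: "(\<Sum>h\<in>D'. h a) = g a + (\<Sum>h\<in>D''. h a)" for a
      unfolding D''_def using True less.prems(1) by (simp add: sum.remove)
    have nn: "0 \<le> (\<Sum>h\<in>D''. h a)" if "a \<in> E" for a
      using less.prems(2) that unfolding D''_def by (intro sum_nonneg) (auto intro: elem_nonneg)
    have el2: "elementary_flow V E tail head sv se u s (\<lambda>a. 2 * g a)"
    proof (rule elem_double[OF less.prems(3)])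
      fix a assume a: "a \<in> E"
      show "2 * g a \<le> real (u a)" using less.prems(4) a sumeq[of a] nn[OF a] by fastforce
    qed
    obtain D where D: "finite D" "\<forall>h\<in>D. elementary_flow V E tail head sv se u s h" "card D \<le> card D'' + 1"
      "\<forall>a\<in>E. (\<Sum>h\<in>D. h a) = 2 * g a + (\<Sum>h\<in>D''. h a)"
      using less.hyps[OF cd fin _ el2] less.prems(2,4) sumeq unfolding D''_def by fastforce
    show ?thesis using D cd sumeq by (intro exI[of _ D]) auto
  qed
qed

definition Phi :: "('e \<Rightarrow> nat) \<Rightarrow> nat" where
  "Phi F = card {a\<in>E. 0 < F a} + card {a\<in>E. 2 \<le> F a}"

lemma divg_nat: "divg E tail head (\<lambda>a. real (F a)) x = real (outN F x) - real (inN F x)"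
  unfolding divg_def outN_def inN_def by simp

lemma card_minus2:
  assumes "finite B" "B' \<subseteq> B" "a \<in> B - B'" "b \<in> B - B'" "a \<noteq> b"
  shows "card B' + 2 \<le> card B"
proof -
  have "B' \<subseteq> B - {a, b}" using assms by auto
  then have "card B' \<le> card (B - {a, b})" using assms(1) by (intro card_mono) auto
  also have "card (B - {a, b}) = card B - 2" using assms by (simp add: card_Diff_subset)
  finally show ?thesis using assms card_mono[of B "{a,b}"] by auto
qed

lemma main_ind:
  "Phi F = n \<Longrightarrow> is_IS_flow V E tail head sv se u s (\<lambda>a. real (F a)) \<Longrightarrow>
   \<exists>D. symmetric_decomposition V E tail head sv se u s (\<lambda>a. real (F a)) D \<and> 2 * card D \<le> Phi F"
proof (induction n arbitrary: F rule: less_induct)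
  case (less n F)
  have flow: "is_IS_flow V E tail head sv se u s (\<lambda>a. real (F a))" by fact
  have Fsym: "\<forall>a\<in>E. F (se a) = F a" using flow unfolding is_IS_flow_def by auto
  have Fu: "\<forall>a\<in>E. F a \<le> u a" using flow unfolding is_IS_flow_def is_flow_def by auto
  have Fdiv: "\<forall>x\<in>V - {s, sv s}. divg E tail head (\<lambda>a. real (F a)) x = 0"
    using flow unfolding is_IS_flow_def is_flow_def by auto
  have Fcons: "\<forall>x\<in>V - {s, sv s}. outN F x = inN F x" using Fdiv divg_nat by simp
  show ?case
  proof (cases "\<exists>a\<in>E. 0 < F a")
    case False
    then show ?thesis unfolding symmetric_decomposition_def by (intro exI[of _ "{}"]) auto
  next
    case True
    obtain P where P: "spc P" "\<forall>a\<in>set P. 0 < F a" "good F P" using exists_P[OF Fsym Fcons True] by blast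
    have PE: "set P \<subseteq> E" using spc_facts(1)[OF P(1)] .
    have Pne: "P \<noteq> []" using P(1) unfolding spc_def simple_cycle_def simple_path_def is_walk_def by auto
    define m where "m a = (if se a \<in> set P then F a div 2 else F a)" for a
    define \<delta> where "\<delta> = Min (m ` set P)"
    define mult :: "'e \<Rightarrow> nat" where "mult a = (if a \<in> set P then 1 else 0) + (if se a \<in> set P then 1 else 0)" for a
    define F' where "F' a = F a - \<delta> * mult a" for a
    define g where "g = form \<delta> P"
    have finP: "finite (m ` set P)" "m ` set P \<noteq> {}" using Pne by auto
    have mge: "1 \<le> m a" if "a \<in> set P" for a
    proof (cases "se a \<in> set P")
      case True
      then have "2 \<le> F a" using P(3) that unfolding good_def by auto
      then show ?thesis using True unfolding m_def by auto
    next
      case False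
      then show ?thesis using P(2) that unfolding m_def by auto
    qed
    have dle: "\<delta> \<le> m a" if "a \<in> set P" for a unfolding \<delta>_def using finP that by auto
    obtain a0 where a0: "a0 \<in> set P" "m a0 = \<delta>" unfolding \<delta>_def using Min_in[OF finP] by auto
    have dpos: "0 < \<delta>" using mge[OF a0(1)] a0(2) by simp
    have multse: "mult (se a) = mult a" if "a \<in> E" for a unfolding mult_def using se_inv[OF that] by auto
    have key: "\<delta> * mult a \<le> F a" if a: "a \<in> E" for a
    proof (cases "a \<in> set P")
      case True
      show ?thesis
      proof (cases "se a \<in> set P")
        case True
        then have "\<delta> \<le> F a div 2" using dle[OF \<open>a \<in> set P\<close>] unfolding m_def by simp
        then show ?thesis using True \<open>a \<in> set P\<close> unfolding mult_def by auto
      next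
        case False
        then show ?thesis using dle[OF \<open>a \<in> set P\<close>] True unfolding mult_def m_def by auto
      qed
    next
      case False
      show ?thesis
      proof (cases "se a \<in> set P")
        case True
        have "se (se a) \<notin> set P" using False se_inv[OF a] by simp
        then have "\<delta> \<le> F (se a)" using dle[OF True] unfolding m_def by simp
        then show ?thesis using Fsym a False True unfolding mult_def by auto
      next
        case False
        then show ?thesis using \<open>a \<notin> set P\<close> unfolding mult_def by auto
      qed
    qed
    have gE: "g a = real (\<delta> * mult a)" if "a \<in> E" for a
      unfolding g_def form_def mult_def using chi_sigma[OF PE that] by (simp add: chi_def algebra_simps)
    have split: "real (F a) = g a + real (F' a)" if "a \<in> E" for a
      using gE[OF that] key[OF that] unfolding F'_def by (simp add: of_nat_diff)
    have gel: "elementary_flow V E tail head sv se u s g"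
      unfolding g_def
    proof (rule elem_intro[OF P(1) dpos])
      fix a assume a: "a \<in> E"
      show "form \<delta> P a \<le> real (u a)" using gE[OF a] key[OF a] Fu a unfolding g_def by (simp del: of_nat_mult) (metis of_nat_le_iff order_trans of_nat_mult)
    qed
    have F'le: "F' a \<le> F a" for a unfolding F'_def by simp
    have F'sym: "\<forall>a\<in>E. F' (se a) = F' a" using Fsym multse seE unfolding F'_def by auto
    have flow': "is_IS_flow V E tail head sv se u s (\<lambda>a. real (F' a))"
      unfolding is_IS_flow_def is_flow_def
    proof (intro conjI ballI)
      fix a assume a: "a \<in> E"
      show "0 \<le> real (F' a)" by simp
      show "real (F' a) \<le> real (u a)" using F'le[of a] Fu a by (meson of_nat_le_iff order_trans)
      show "real (F' a) \<in> \<int>" by simp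
      show "real (F' (se a)) = real (F' a)" using F'sym a by simp
    next
      fix x assume x: "x \<in> V - {s, sv s}"
      have "divg E tail head (\<lambda>a. real (F' a)) x = divg E tail head (\<lambda>a. real (F a) - g a) x"
        by (rule divg_cong) (simp add: split)
      also have "\<dots> = 0" using divg_diff[of E tail head "\<lambda>a. real (F a)" g x] Fdiv elem_div[OF gel x] x by simp
      finally show "divg E tail head (\<lambda>a. real (F' a)) x = 0" .
    qed
    have phi: "Phi F' + 2 \<le> Phi F"
    proof -
      define A where "A = {a\<in>E. 0 < F a}"
      define A' where "A' = {a\<in>E. 0 < F' a}"
      define B where "B = {a\<in>E. 2 \<le> F a}"
      define B' where "B' = {a\<in>E. 2 \<le> F' a}"
      have AA: "A' \<subseteq> A" "B' \<subseteq> B" unfolding A_def A'_def B_def B'_def using F'le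
        by (auto intro: le_trans less_le_trans)
      have a0E: "a0 \<in> E" "se a0 \<in> E" "se a0 \<noteq> a0" using a0 PE seE se_neq by auto
      have F'se: "F' (se a0) = F' a0" "F (se a0) = F a0" using F'sym Fsym a0E by auto
      show ?thesis
      proof (cases "se a0 \<in> set P")
        case True
        have "2 \<le> F a0" using P(3) a0(1) True unfolding good_def by auto
        moreover have "F' a0 < 2" using True a0 unfolding F'_def mult_def m_def by auto
        ultimately have "a0 \<in> B - B'" "se a0 \<in> B - B'" using a0E F'se unfolding B_def B'_def by auto
        then have "card B' + 2 \<le> card B" using card_minus2[OF _ AA(2)] a0E finE unfolding B_def by auto
        moreover have "card A' \<le> card A" using AA(1) finE unfolding A_def by (intro card_mono) auto
        ultimately show ?thesis unfolding Phi_def A_def A'_def B_def B'_def by simp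
      next
        case False
        have "F' a0 = 0" using False a0 unfolding F'_def mult_def m_def by auto
        then have "a0 \<in> A - A'" "se a0 \<in> A - A'" using a0E F'se P(2) a0(1) unfolding A_def A'_def by auto
        then have "card A' + 2 \<le> card A" using card_minus2[OF _ AA(1)] a0E finE unfolding A_def by auto
        moreover have "card B' \<le> card B" using AA(2) finE unfolding B_def by (intro card_mono) auto
        ultimately show ?thesis unfolding Phi_def A_def A'_def B_def B'_def by simp
      qed
    qed
    then have "Phi F' < n" using less.prems(1) by simp
    from less.IH[OF this refl flow'] obtain D' where D': "symmetric_decomposition V E tail head sv se u s (\<lambda>a. real (F' a)) D'"
      "2 * card D' \<le> Phi F'" by blast
    have D'f: "finite D'" "\<forall>h\<in>D'. elementary_flow V E tail head sv se u s h" "\<forall>a\<in>E. real (F' a) = (\<Sum>h\<in>D'. h a)"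
      using D'(1) unfolding symmetric_decomposition_def by auto
    have bound: "\<forall>a\<in>E. g a + (\<Sum>h\<in>D'. h a) \<le> real (u a)"
      using D'f(3) split Fu by (metis of_nat_le_iff)
    obtain D where D: "finite D" "\<forall>h\<in>D. elementary_flow V E tail head sv se u s h" "card D \<le> card D' + 1"
      "\<forall>a\<in>E. (\<Sum>h\<in>D. h a) = g a + (\<Sum>h\<in>D'. h a)"
      using decomp_insert[OF D'f(1,2) gel bound] by blast
    have "symmetric_decomposition V E tail head sv se u s (\<lambda>a. real (F a)) D"
      unfolding symmetric_decomposition_def using D D'f(3) split by auto
    moreover have "2 * card D \<le> Phi F" using D(3) D'(2) phi by linarith
    ultimately show ?thesis by blast
  qed
qed

lemma Phi_le: "Phi F \<le> 2 * card E"
proof -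
  have "card {a\<in>E. 0 < F a} \<le> card E" "card {a\<in>E. 2 \<le> F a} \<le> card E"
    using finE by (auto intro: card_mono)
  then show ?thesis unfolding Phi_def by simp
qed

end


theorem mainTheorem2:
  fixes V :: "'v set" and E :: "'e set" and tail head :: "'e \<Rightarrow> 'v"
    and sv :: "'v \<Rightarrow> 'v" and se :: "'e \<Rightarrow> 'e" and u :: "'e \<Rightarrow> nat" and s :: 'v
    and f :: "'e \<Rightarrow> real"
  assumes "skew_network V E tail head sv se u s"
    and "is_IS_flow V E tail head sv se u s f"
  shows "\<exists>D. symmetric_decomposition V E tail head sv se u s f D \<and> card D \<le> card E"
proof -
  interpret skn V E tail head sv se u s by unfold_locales (rule assms(1))
  define F where "F a = nat \<lfloor>f a\<rfloor>" for a
  have fl: "\<forall>a\<in>E. 0 \<le> f a \<and> f a \<le> real (u a) \<and> f a \<in> \<int> \<and> f (se a) = f a"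
    using assms(2) unfolding is_IS_flow_def is_flow_def by auto
  have Ff: "real (F a) = f a" if "a \<in> E" for a
  proof -
    from fl that obtain k where k: "f a = of_int k" by (auto elim: Ints_cases)
    have "0 \<le> k" using fl that k by (metis of_int_0_le_iff)
    then show ?thesis using k unfolding F_def by simp
  qed
  have flow: "is_IS_flow V E tail head sv se u s (\<lambda>a. real (F a))"
    unfolding is_IS_flow_def is_flow_def
  proof (intro conjI ballI)
    fix a assume a: "a \<in> E"
    show "0 \<le> real (F a)" by simp
    show "real (F a) \<le> real (u a)" using Ff[OF a] fl a by simp
    show "real (F a) \<in> \<int>" by simp
    show "real (F (se a)) = real (F a)" using Ff[OF a] Ff[OF seE[OF a]] fl a by simp
  next
    fix x assume x: "x \<in> V - {s, sv s}"
    have "divg E tail head (\<lambda>a. real (F a)) x = divg E tail head f x"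
      by (rule divg_cong) (simp add: Ff)
    then show "divg E tail head (\<lambda>a. real (F a)) x = 0"
      using assms(2) x unfolding is_IS_flow_def is_flow_def by simp
  qed
  obtain D where D: "symmetric_decomposition V E tail head sv se u s (\<lambda>a. real (F a)) D" "2 * card D \<le> Phi F"
    using main_ind[OF refl flow] by blast
  have "symmetric_decomposition V E tail head sv se u s f D"
    using D(1) Ff unfolding symmetric_decomposition_def by auto
  moreover have "card D \<le> card E" using D(2) Phi_le[of F] by simp
  ultimately show ?thesis by blast
qed

end
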